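(* Let $\Omega$ be a non-empty bounded open subset of $\mathbf{R}^2$, let $h:\Omega\to\mathbf{R}$ be a continuous non-negative function, and let $w\in C^2(\Omega)$ satisfy in $\Omega$ the Monge–Ampère equation $w_{xx}w_{yy}-w_{xy}^2=h$. Then the gradient $(w_x,w_y):\Omega\to\mathbf{R}^2$ satisfies the convex hull-like property in $\Omega$.
   Context: A function $\psi:\mathbf{R}^2\to\mathbf{R}$ is quasi-convex if for each $r\in\mathbf{R}$ the set $\psi^{-1}(]-\infty,r])$ is convex. A continuous function $f:\Omega\to\mathbf{R}^2$ satisfies the convex hull-like property in $\Omega$ if for every continuous quasi-convex $\psi:\mathbf{R}^2\to\mathbf{R}$ there exists $x^*\in\partial\Omega$ such that $\limsup_{x\to x^*,\,x\in\Omega}\psi(f(x))=\sup_{x\in\Omega}\psi(f(x))$. *)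

theory Defs
  imports "HOL-Analysis.Analysis" "HOL-Library.Liminf_Limsup"
begin

definition partial_x :: "(real \<times> real \<Rightarrow> real) \<Rightarrow> real \<times> real \<Rightarrow> real" where
  "partial_x f p = deriv (\<lambda>t. f (t, snd p)) (fst p)"

definition partial_y :: "(real \<times> real \<Rightarrow> real) \<Rightarrow> real \<times> real \<Rightarrow> real" where
  "partial_y f p = deriv (\<lambda>t. f (fst p, t)) (snd p)"

definition has_partials_on :: "(real \<times> real) set \<Rightarrow> (real \<times> real \<Rightarrow> real) \<Rightarrow> bool" where
  "has_partials_on \<Omega> f \<longleftrightarrow>
     (\<forall>p\<in>\<Omega>. (\<lambda>t. f (t, snd p)) differentiable (at (fst p)) \<and>
              (\<lambda>t. f (fst p, t)) differentiable (at (snd p)))"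

definition C2_on :: "(real \<times> real) set \<Rightarrow> (real \<times> real \<Rightarrow> real) \<Rightarrow> bool" where
  "C2_on \<Omega> w \<longleftrightarrow>
     continuous_on \<Omega> w \<and>
     has_partials_on \<Omega> w \<and>
     has_partials_on \<Omega> (partial_x w) \<and> has_partials_on \<Omega> (partial_y w) \<and>
     continuous_on \<Omega> (partial_x w) \<and> continuous_on \<Omega> (partial_y w) \<and>
     continuous_on \<Omega> (partial_x (partial_x w)) \<and> continuous_on \<Omega> (partial_y (partial_x w)) \<and>
     continuous_on \<Omega> (partial_x (partial_y w)) \<and> continuous_on \<Omega> (partial_y (partial_y w))"

definition quasi_convex :: "(real \<times> real \<Rightarrow> real) \<Rightarrow> bool" where
  "quasi_convex \<psi> \<longleftrightarrow> (\<forall>r. convex {z. \<psi> z \<le> r})"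

definition convex_hull_like :: "(real \<times> real) set \<Rightarrow> (real \<times> real \<Rightarrow> real \<times> real) \<Rightarrow> bool" where
  "convex_hull_like \<Omega> f \<longleftrightarrow>
     (\<forall>\<psi>. continuous_on UNIV \<psi> \<and> quasi_convex \<psi> \<longrightarrow>
        (\<exists>x\<in>frontier \<Omega>.
           Limsup (at x within \<Omega>) (\<lambda>z. ereal (\<psi> (f z))) = (SUP z\<in>\<Omega>. ereal (\<psi> (f z)))))"

end

theory Submission
  imports Defs
begin

lemma box_in_open:
  fixes p :: "real \<times> real"
  assumes "open \<Omega>" "p \<in> \<Omega>"
  obtains r where "r > 0" "\<And>x y. \<bar>x - fst p\<bar> < r \<Longrightarrow> \<bar>y - snd p\<bar> < r \<Longrightarrow> (x, y) \<in> \<Omega>"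
proof -
  obtain e where e: "e > 0" "\<And>z. dist z p < e \<Longrightarrow> z \<in> \<Omega>"
    using assms open_dist by (metis dist_commute)
  have "(x, y) \<in> \<Omega>" if "\<bar>x - fst p\<bar> < e/2" "\<bar>y - snd p\<bar> < e/2" for x y
  proof -
    have "dist (x, y) p = sqrt ((dist x (fst p))\<^sup>2 + (dist y (snd p))\<^sup>2)"
      by (metis dist_Pair_Pair prod.collapse)
    also have "\<dots> \<le> \<bar>dist x (fst p)\<bar> + \<bar>dist y (snd p)\<bar>"
      by (rule sqrt_sum_squares_le_sum_abs)
    also have "\<dots> < e" using that by (simp add: dist_real_def)
    finally show ?thesis using e by blast
  qed
  then show ?thesis using that[of "e/2"] e by auto
qed

lemma px_deriv:
  assumes "has_partials_on \<Omega> f" "(x, y) \<in> \<Omega>"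
  shows "((\<lambda>t. f (t, y)) has_real_derivative partial_x f (x, y)) (at x)"
  using assms unfolding has_partials_on_def partial_x_def
  by (metis DERIV_deriv_iff_real_differentiable fst_conv snd_conv)

lemma py_deriv:
  assumes "has_partials_on \<Omega> f" "(x, y) \<in> \<Omega>"
  shows "((\<lambda>t. f (x, t)) has_real_derivative partial_y f (x, y)) (at y)"
  using assms unfolding has_partials_on_def partial_y_def
  by (metis DERIV_deriv_iff_real_differentiable fst_conv snd_conv)

lemma schwarz_mvt:
  fixes w :: "real \<times> real \<Rightarrow> real"
  assumes hw: "has_partials_on \<Omega> w" and hx: "has_partials_on \<Omega> (partial_x w)"
    and hy: "has_partials_on \<Omega> (partial_y w)"
    and box: "\<And>x y. \<bar>x - x0\<bar> < r \<Longrightarrow> \<bar>y - y0\<bar> < r \<Longrightarrow> (x, y) \<in> \<Omega>"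
    and h: "0 < h" "h < r"
  shows "\<exists>\<xi> \<eta> \<xi>' \<eta>'. \<bar>\<xi> - x0\<bar> < h \<and> \<bar>\<eta> - y0\<bar> < h \<and> \<bar>\<xi>' - x0\<bar> < h \<and> \<bar>\<eta>' - y0\<bar> < h \<and>
     partial_y (partial_x w) (\<xi>, \<eta>) = partial_x (partial_y w) (\<xi>', \<eta>')"
proof -
  define \<Delta> where "\<Delta> = w (x0+h, y0+h) - w (x0+h, y0) - w (x0, y0+h) + w (x0, y0)"
  have inb: "(x, y) \<in> \<Omega>" if "x0 \<le> x" "x \<le> x0 + h" "y0 \<le> y" "y \<le> y0 + h" for x y
    using box[of x y] that h by auto
  obtain \<xi> where \<xi>: "x0 < \<xi>" "\<xi> < x0 + h"
    "(\<lambda>s. w (s, y0+h) - w (s, y0)) (x0+h) - (\<lambda>s. w (s, y0+h) - w (s, y0)) x0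
      = (x0 + h - x0) * (partial_x w (\<xi>, y0+h) - partial_x w (\<xi>, y0))"
  proof -
    have "\<exists>z. x0 < z \<and> z < x0 + h \<and>
      (\<lambda>s. w (s, y0+h) - w (s, y0)) (x0+h) - (\<lambda>s. w (s, y0+h) - w (s, y0)) x0
      = (x0 + h - x0) * (\<lambda>s. partial_x w (s, y0+h) - partial_x w (s, y0)) z"
    proof (rule MVT2)
      show "x0 < x0 + h" using h by simp
      fix s assume "x0 \<le> s" "s \<le> x0 + h"
      then show "((\<lambda>s. w (s, y0+h) - w (s, y0)) has_real_derivative
          (\<lambda>s. partial_x w (s, y0+h) - partial_x w (s, y0)) s) (at s)"
        using inb h by (auto intro!: DERIV_diff px_deriv[OF hw])
    qed
    then show ?thesis using that by auto
  qed
  obtain \<eta> where \<eta>: "y0 < \<eta>" "\<eta> < y0 + h"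
    "partial_x w (\<xi>, y0+h) - partial_x w (\<xi>, y0) = (y0 + h - y0) * partial_y (partial_x w) (\<xi>, \<eta>)"
  proof -
    have "\<exists>z. y0 < z \<and> z < y0 + h \<and>
      (\<lambda>t. partial_x w (\<xi>, t)) (y0+h) - (\<lambda>t. partial_x w (\<xi>, t)) y0
      = (y0 + h - y0) * (\<lambda>t. partial_y (partial_x w) (\<xi>, t)) z"
    proof (rule MVT2)
      show "y0 < y0 + h" using h by simp
      fix t assume "y0 \<le> t" "t \<le> y0 + h"
      then show "((\<lambda>t. partial_x w (\<xi>, t)) has_real_derivative
          (\<lambda>t. partial_y (partial_x w) (\<xi>, t)) t) (at t)"
        using inb \<xi> by (auto intro!: py_deriv[OF hx])
    qed
    then show ?thesis using that by auto
  qed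
  obtain \<eta>' where \<eta>': "y0 < \<eta>'" "\<eta>' < y0 + h"
    "(\<lambda>t. w (x0+h, t) - w (x0, t)) (y0+h) - (\<lambda>t. w (x0+h, t) - w (x0, t)) y0
      = (y0 + h - y0) * (partial_y w (x0+h, \<eta>') - partial_y w (x0, \<eta>'))"
  proof -
    have "\<exists>z. y0 < z \<and> z < y0 + h \<and>
      (\<lambda>t. w (x0+h, t) - w (x0, t)) (y0+h) - (\<lambda>t. w (x0+h, t) - w (x0, t)) y0
      = (y0 + h - y0) * (\<lambda>t. partial_y w (x0+h, t) - partial_y w (x0, t)) z"
    proof (rule MVT2)
      show "y0 < y0 + h" using h by simp
      fix t assume "y0 \<le> t" "t \<le> y0 + h"
      then show "((\<lambda>t. w (x0+h, t) - w (x0, t)) has_real_derivative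
          (\<lambda>t. partial_y w (x0+h, t) - partial_y w (x0, t)) t) (at t)"
        using inb h by (auto intro!: DERIV_diff py_deriv[OF hw])
    qed
    then show ?thesis using that by auto
  qed
  obtain \<xi>' where \<xi>': "x0 < \<xi>'" "\<xi>' < x0 + h"
    "partial_y w (x0+h, \<eta>') - partial_y w (x0, \<eta>') = (x0 + h - x0) * partial_x (partial_y w) (\<xi>', \<eta>')"
  proof -
    have "\<exists>z. x0 < z \<and> z < x0 + h \<and>
      (\<lambda>s. partial_y w (s, \<eta>')) (x0+h) - (\<lambda>s. partial_y w (s, \<eta>')) x0
      = (x0 + h - x0) * (\<lambda>s. partial_x (partial_y w) (s, \<eta>')) z"
    proof (rule MVT2)
      show "x0 < x0 + h" using h by simp
      fix s assume "x0 \<le> s" "s \<le> x0 + h"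
      then show "((\<lambda>s. partial_y w (s, \<eta>')) has_real_derivative
          (\<lambda>s. partial_x (partial_y w) (s, \<eta>')) s) (at s)"
        using inb \<eta>' by (auto intro!: px_deriv[OF hy])
    qed
    then show ?thesis using that by auto
  qed
  have "h * h * partial_y (partial_x w) (\<xi>, \<eta>) = \<Delta>"
    using \<xi>(3) \<eta>(3) unfolding \<Delta>_def by (simp add: algebra_simps)
  moreover have "h * h * partial_x (partial_y w) (\<xi>', \<eta>') = \<Delta>"
    using \<eta>'(3) \<xi>'(3) unfolding \<Delta>_def by (simp add: algebra_simps)
  ultimately have "partial_y (partial_x w) (\<xi>, \<eta>) = partial_x (partial_y w) (\<xi>', \<eta>')"
    using h by (metis mult_cancel_left mult_eq_0_iff less_irrefl)
  then show ?thesis using \<xi> \<eta> \<xi>' \<eta>' by (intro exI[of _ \<xi>] exI[of _ \<eta>] exI[of _ \<xi>'] exI[of _ \<eta>']) auto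
qed

lemma dist_pair_le: "dist (x, y) (p::real\<times>real) \<le> \<bar>x - fst p\<bar> + \<bar>y - snd p\<bar>"
proof -
  have "dist (x, y) p = sqrt ((dist x (fst p))\<^sup>2 + (dist y (snd p))\<^sup>2)"
    by (metis dist_Pair_Pair prod.collapse)
  also have "\<dots> \<le> \<bar>dist x (fst p)\<bar> + \<bar>dist y (snd p)\<bar>"
    by (rule sqrt_sum_squares_le_sum_abs)
  finally show ?thesis by (simp add: dist_real_def)
qed

lemma schwarz:
  fixes w :: "real \<times> real \<Rightarrow> real"
  assumes "open \<Omega>" and hw: "has_partials_on \<Omega> w" and hx: "has_partials_on \<Omega> (partial_x w)"
    and hy: "has_partials_on \<Omega> (partial_y w)"
    and cxy: "continuous_on \<Omega> (partial_y (partial_x w))"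
    and cyx: "continuous_on \<Omega> (partial_x (partial_y w))"
    and p: "p \<in> \<Omega>"
  shows "partial_y (partial_x w) p = partial_x (partial_y w) p"
proof (rule ccontr)
  let ?A = "partial_y (partial_x w)" and ?B = "partial_x (partial_y w)"
  assume ne: "?A p \<noteq> ?B p"
  define e where "e = \<bar>?A p - ?B p\<bar> / 2"
  have e: "e > 0" using ne by (simp add: e_def)
  obtain r where r: "r > 0" "\<And>x y. \<bar>x - fst p\<bar> < r \<Longrightarrow> \<bar>y - snd p\<bar> < r \<Longrightarrow> (x, y) \<in> \<Omega>"
    using box_in_open[OF assms(1) p] by blast
  have "isCont ?A p" "isCont ?B p"
    using cxy cyx assms(1) p continuous_on_eq_continuous_at by blast+
  then obtain d1 d2 where d1: "d1 > 0" "\<And>z. dist z p < d1 \<Longrightarrow> dist (?A z) (?A p) < e"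
    and d2: "d2 > 0" "\<And>z. dist z p < d2 \<Longrightarrow> dist (?B z) (?B p) < e"
    using e unfolding continuous_at_eps_delta by metis
  define h where "h = min r (min d1 d2) / 4"
  have h: "0 < h" "h < r" using r d1 d2 by (auto simp: h_def)
  obtain \<xi> \<eta> \<xi>' \<eta>' where pts: "\<bar>\<xi> - fst p\<bar> < h" "\<bar>\<eta> - snd p\<bar> < h" "\<bar>\<xi>' - fst p\<bar> < h" "\<bar>\<eta>' - snd p\<bar> < h"
    "?A (\<xi>, \<eta>) = ?B (\<xi>', \<eta>')"
    using schwarz_mvt[OF hw hx hy r(2) h] by blast
  have "dist (\<xi>, \<eta>) p < d1"
    using dist_pair_le[of \<xi> \<eta> p] pts h_def d1 d2 r by (auto simp: min_def split: if_splits)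
  then have a: "\<bar>?A (\<xi>, \<eta>) - ?A p\<bar> < e" using d1 by (simp add: dist_real_def)
  have "dist (\<xi>', \<eta>') p < d2"
    using dist_pair_le[of \<xi>' \<eta>' p] pts h_def d1 d2 r by (auto simp: min_def split: if_splits)
  then have b: "\<bar>?B (\<xi>', \<eta>') - ?B p\<bar> < e" using d2 by (simp add: dist_real_def)
  from a b pts(5) have "\<bar>?A p - ?B p\<bar> < 2 * e" by linarith
  then show False by (simp add: e_def)
qed

lemma frechet_from_partials:
  fixes u :: "real \<times> real \<Rightarrow> real"
  assumes "open \<Omega>" and hu: "has_partials_on \<Omega> u" and cy: "continuous_on \<Omega> (partial_y u)"
    and p: "p \<in> \<Omega>"
  shows "(u has_derivative (\<lambda>h. fst h * partial_x u p + snd h * partial_y u p)) (at p)"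
proof -
  obtain x0 y0 where p0: "p = (x0, y0)" by (cases p)
  obtain r where r: "r > 0" "\<And>x y. \<bar>x - fst p\<bar> < r \<Longrightarrow> \<bar>y - snd p\<bar> < r \<Longrightarrow> (x, y) \<in> \<Omega>"
    using box_in_open[OF assms(1) p] by blast
  define X where "X = ball x0 r"
  define Y where "Y = ball y0 r"
  have XY: "x \<in> X \<Longrightarrow> y \<in> Y \<Longrightarrow> (x, y) \<in> \<Omega>" for x y
    using r p0 by (auto simp: X_def Y_def dist_real_def abs_minus_commute)
  have opXY: "open (X \<times> Y)" by (simp add: X_def Y_def open_Times)
  have inXY: "(x0, y0) \<in> X \<times> Y" using r by (simp add: X_def Y_def)
  have fx: "((\<lambda>x. u (x, y0)) has_derivative (\<lambda>t. t * partial_x u p)) (at x0 within X)"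
  proof -
    have e: "(\<lambda>t. t * partial_x u p) = (*) (partial_x u p)" by (auto simp: fun_eq_iff)
    show ?thesis
      using px_deriv[OF hu, of x0 y0] p p0 unfolding has_field_derivative_def e
      by (auto intro: has_derivative_at_withinI)
  qed
  have fy: "((\<lambda>y. u (x, y)) has_derivative blinfun_apply (blinfun_scaleR_left (partial_y u (x, y)))) (at y within Y)"
    if "x \<in> X" "y \<in> Y" for x y
  proof -
    have e: "blinfun_apply (blinfun_scaleR_left (partial_y u (x, y))) = (*) (partial_y u (x, y))"
      by (auto simp: fun_eq_iff)
    show ?thesis
      using py_deriv[OF hu XY[OF that]] unfolding has_field_derivative_def e
      by (auto intro: has_derivative_at_withinI)
  qed
  have ic: "isCont (partial_y u) (x0, y0)"
    using cy assms(1) p p0 continuous_on_eq_continuous_at by blast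
  have cont: "continuous (at (x0, y0) within X \<times> Y) (\<lambda>(x, y). blinfun_scaleR_left (partial_y u (x, y)))"
  proof -
    have "isCont (\<lambda>z. blinfun_scaleR_left (partial_y u z)) (x0, y0)"
      using ic by (intro continuous_intros) auto
    then show ?thesis by (simp add: split_beta' continuous_at_imp_continuous_at_within)
  qed
  have "((\<lambda>(x, y). u (x, y)) has_derivative
      (\<lambda>(tx, ty). tx * partial_x u p + blinfun_scaleR_left (partial_y u (x0, y0)) ty)) (at (x0, y0) within X \<times> Y)"
    by (rule has_derivative_partialsI[OF fx fy cont]) (use inXY in \<open>auto simp: Y_def\<close>)
  then have "(u has_derivative (\<lambda>(tx, ty). tx * partial_x u p + blinfun_scaleR_left (partial_y u (x0, y0)) ty)) (at p)"
    using at_within_open[OF inXY opXY] p0 by (simp add: split_beta')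
  then show ?thesis
    by (rule has_derivative_eq_rhs) (auto simp: p0 split_beta' fun_eq_iff mult.commute)
qed


lemma real_induct_right:
  fixes S :: "real set"
  assumes ab: "a \<le> b" and cl: "closed S" and aS: "a \<in> S"
    and step: "\<And>t. t \<in> S \<Longrightarrow> a \<le> t \<Longrightarrow> t < b \<Longrightarrow> \<exists>\<delta>>0. \<forall>t'. t \<le> t' \<and> t' < t + \<delta> \<longrightarrow> t' \<in> S"
  shows "b \<in> S"
proof (rule ccontr)
  assume bS: "b \<notin> S"
  define R where "R = {a..b} - S"
  have bR: "b \<in> R" using ab bS by (simp add: R_def)
  have bdd: "bdd_below R" by (auto simp: R_def bdd_below_def)
  define \<sigma> where "\<sigma> = Inf R"
  have \<sigma>b: "\<sigma> \<le> b" using cInf_lower[OF bR bdd] by (simp add: \<sigma>_def)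
  have a\<sigma>: "a \<le> \<sigma>" unfolding \<sigma>_def using bR by (intro cInf_greatest) (auto simp: R_def)
  have below: "t \<in> S" if "a \<le> t" "t < \<sigma>" for t
  proof (rule ccontr)
    assume "t \<notin> S"
    then have "t \<in> R" using that \<sigma>b by (simp add: R_def)
    then have "\<sigma> \<le> t" using cInf_lower[OF _ bdd] by (simp add: \<sigma>_def)
    then show False using that by simp
  qed
  have \<sigma>S: "\<sigma> \<in> S"
  proof (cases "\<sigma> = a")
    case True then show ?thesis using aS by simp
  next
    case False
    then have "a < \<sigma>" using a\<sigma> by simp
    have "\<exists>y\<in>S. dist y \<sigma> < e" if "e > 0" for e
    proof -
      define y where "y = max a (\<sigma> - e/2)"
      have "y \<in> S" using below[of y] \<open>a < \<sigma>\<close> that by (auto simp: y_def)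
      moreover have "dist y \<sigma> < e" using \<open>a < \<sigma>\<close> that by (auto simp: y_def dist_real_def)
      ultimately show ?thesis by blast
    qed
    then show ?thesis using closed_approachable[OF cl] by blast
  qed
  have "\<sigma> \<noteq> b" using \<sigma>S bS by auto
  then have "\<sigma> < b" using \<sigma>b by simp
  then obtain \<delta> where \<delta>: "\<delta> > 0" "\<And>t'. \<sigma> \<le> t' \<Longrightarrow> t' < \<sigma> + \<delta> \<Longrightarrow> t' \<in> S"
    using step[OF \<sigma>S a\<sigma>] by blast
  have "\<sigma> + \<delta> \<le> Inf R"
  proof (rule cInf_greatest)
    show "R \<noteq> {}" using bR by blast
    fix r assume r: "r \<in> R"
    then have "\<sigma> \<le> r" using cInf_lower[OF _ bdd] by (simp add: \<sigma>_def)
    moreover have "r \<notin> S" using r by (simp add: R_def)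
    ultimately show "\<sigma> + \<delta> \<le> r" using \<delta> by (meson not_le)
  qed
  then show False using \<delta> by (simp add: \<sigma>_def)
qed

lemma compact_gap:
  fixes G :: "'a::topological_space \<Rightarrow> real"
  assumes "compact K" "continuous_on K G" "\<And>p. p \<in> K \<Longrightarrow> G p < M"
  obtains \<mu> where "\<mu> > 0" "\<And>p. p \<in> K \<Longrightarrow> G p \<le> M - \<mu>"
proof (cases "K = {}")
  case True then show ?thesis using that[of 1] by auto
next
  case False
  then obtain p0 where "p0 \<in> K" "\<And>p. p \<in> K \<Longrightarrow> G p \<le> G p0"
    using continuous_attains_sup[OF assms(1) False assms(2)] by blast
  then show ?thesis using that[of "M - G p0"] assms(3) by force
qed

lemma core:
  fixes G :: "real \<times> real \<Rightarrow> real"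
  assumes Q: "open Q" and cT: "compact T" and Tne: "T \<noteq> {}" and TO: "T \<subseteq> Q"
    and le: "\<And>p. p \<in> Q \<Longrightarrow> G p \<le> M" and eqT: "\<And>p. p \<in> Q \<Longrightarrow> G p = M \<Longrightarrow> p \<in> T"
    and TM: "\<And>p. p \<in> T \<Longrightarrow> G p = M"
    and cG: "continuous_on Q G"
    and der: "\<And>s t. (s, t) \<in> Q \<Longrightarrow> \<exists>Ds Dt. ((\<lambda>s'. G (s', t)) has_real_derivative Ds) (at s) \<and>
                ((\<lambda>t'. G (s, t')) has_real_derivative Dt) (at t) \<and> (Ds = 0 \<longrightarrow> Dt = 0)"
  shows False
proof -
  obtain e where e: "e > 0" "\<And>x. x \<in> T \<Longrightarrow> ball x e \<subseteq> Q"
    using Heine_Borel_lemma[OF cT, of "{Q}"] TO Q by auto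
  define N where "N = {x + y | x y. x \<in> T \<and> y \<in> cball 0 (e/2)}"
  have cN: "compact N" unfolding N_def by (intro compact_sums cT compact_cball)
  then have clN: "closed N" by (rule compact_imp_closed)
  have NO: "N \<subseteq> Q"
  proof
    fix z assume "z \<in> N"
    then obtain x y where xy: "z = x + y" "x \<in> T" "norm y \<le> e/2" by (auto simp: N_def)
    then have "z \<in> ball x e" using e by (simp add: dist_norm)
    then show "z \<in> Q" using e xy by blast
  qed
  have TintN: "T \<subseteq> interior N"
  proof
    fix x assume x: "x \<in> T"
    have "ball x (e/2) \<subseteq> N"
    proof
      fix z assume "z \<in> ball x (e/2)"
      then have "z = x + (z - x)" "z - x \<in> cball 0 (e/2)" by (auto simp: dist_norm norm_minus_commute)
      then show "z \<in> N" using x unfolding N_def by blast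
    qed
    then show "x \<in> interior N" using e mem_interior by (metis half_gt_zero)
  qed
  have cGN: "continuous_on N G" using cG NO continuous_on_subset by blast
  have cF: "compact (frontier N)"
    using cN by (rule compact_frontier)
  have FN: "frontier N \<subseteq> N" using clN by (rule frontier_subset_closed)
  have "G p < M" if "p \<in> frontier N" for p
  proof -
    have "p \<in> Q" using that FN NO by blast
    moreover have "p \<notin> T" using that TintN by (auto simp: frontier_def)
    ultimately show ?thesis using le[of p] eqT[of p] by linarith
  qed
  then obtain \<eta> where \<eta>: "\<eta> > 0" "\<And>p. p \<in> frontier N \<Longrightarrow> G p \<le> M - \<eta>"
    using compact_gap[OF cF continuous_on_subset[OF cGN FN]] by blast
  obtain p1 where p1: "p1 \<in> T" "\<And>p. p \<in> T \<Longrightarrow> snd p \<le> snd p1"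
  proof -
    have "continuous_on T snd" by (intro continuous_intros)
    then show ?thesis using continuous_attains_sup[OF cT Tne, of snd] that by blast
  qed
  define t1 where "t1 = snd p1"
  define t2 where "t2 = t1 + 1"
  define K2 where "K2 = N \<inter> {p. snd p = t2}"
  have cK2: "compact K2" unfolding K2_def
    by (intro compact_Int_closed cN closed_Collect_eq) (auto intro: continuous_intros)
  have "G p < M" if "p \<in> K2" for p
  proof -
    have "p \<in> Q" using that NO by (auto simp: K2_def)
    moreover have "p \<notin> T" using that p1(2)[of p] by (auto simp: K2_def t2_def t1_def)
    ultimately show ?thesis using le[of p] eqT[of p] by linarith
  qed
  moreover have "K2 \<subseteq> N" by (auto simp: K2_def)
  ultimately obtain \<mu> where \<mu>: "\<mu> > 0" "\<And>p. p \<in> K2 \<Longrightarrow> G p \<le> M - \<mu>"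
    using compact_gap[OF cK2 continuous_on_subset[OF cGN], of M] by blast
  define \<epsilon> where "\<epsilon> = min \<mu> \<eta> / 2"
  have \<epsilon>: "\<epsilon> > 0" "\<epsilon> < \<mu>" "\<epsilon> < \<eta>" using \<mu> \<eta> by (auto simp: \<epsilon>_def)
  define C where "C = N \<inter> (\<lambda>p. G p + \<epsilon> * (snd p - t1)) -` {M..}"
  have clC: "closed C" unfolding C_def
    by (intro continuous_closed_preimage clN closed_atLeast continuous_intros cGN)
  have cC: "compact C"
  proof -
    have "C = N \<inter> C" by (auto simp: C_def)
    then show ?thesis using compact_Int_closed[OF cN clC] by simp
  qed
  define S where "S = snd ` C"
  have clS: "closed S" unfolding S_def
    by (intro compact_imp_closed compact_continuous_image cC continuous_intros)
  have t1S: "t1 \<in> S"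
  proof -
    have "p1 \<in> N" using p1 TintN interior_subset by blast
    then have "p1 \<in> C" using TM[OF p1(1)] by (simp add: C_def t1_def)
    then show ?thesis by (simp add: S_def t1_def)
  qed
  have step: "\<exists>\<delta>>0. \<forall>t'. t \<le> t' \<and> t' < t + \<delta> \<longrightarrow> t' \<in> S"
    if tS: "t \<in> S" and tt1: "t1 \<le> t" and tt2: "t < t2" for t
  proof -
    obtain s where sC: "(s, t) \<in> C" using tS by (auto simp: S_def)
    define Kt where "Kt = N \<inter> {p. snd p = t}"
    have cKt: "compact Kt" unfolding Kt_def
      by (intro compact_Int_closed cN closed_Collect_eq) (auto intro: continuous_intros)
    have "(s, t) \<in> Kt" using sC by (simp add: C_def Kt_def)
    then obtain q where q: "q \<in> Kt" "\<And>p. p \<in> Kt \<Longrightarrow> G p \<le> G q"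
    proof -
      have "Kt \<noteq> {}" "Kt \<subseteq> N" using \<open>(s, t) \<in> Kt\<close> by (auto simp: Kt_def)
      then show ?thesis using continuous_attains_sup[OF cKt _ continuous_on_subset[OF cGN]] that by blast
    qed
    obtain s' where q': "q = (s', t)" using q(1) by (cases q) (auto simp: Kt_def)
    have Gq: "G q \<ge> M - \<epsilon> * (t - t1)"
      using q(2)[OF \<open>(s, t) \<in> Kt\<close>] sC by (auto simp: C_def)
    have "\<epsilon> * (t - t1) \<le> \<epsilon> * 1" using tt1 tt2 \<epsilon> by (intro mult_left_mono) (auto simp: t2_def)
    then have "G q > M - \<eta>" using Gq \<epsilon> by linarith
    then have "q \<notin> frontier N" using \<eta>(2)[of q] by linarith
    moreover have "q \<in> N" using q by (simp add: Kt_def)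
    ultimately have "q \<in> interior N" using clN by (simp add: frontier_def)
    then obtain r where r: "r > 0" "ball q r \<subseteq> N" using mem_interior by blast
    have "q \<in> Q" using \<open>q \<in> N\<close> NO by blast
    then obtain Ds Dt where D: "((\<lambda>x. G (x, t)) has_real_derivative Ds) (at s')"
       "((\<lambda>y. G (s', y)) has_real_derivative Dt) (at t)" "Ds = 0 \<longrightarrow> Dt = 0"
      using der[of s' t] q' by blast
    have "Ds = 0"
    proof (rule DERIV_local_max[OF D(1) r(1)], intro allI impI)
      fix y assume "\<bar>s' - y\<bar> < r"
      then have "(y, t) \<in> ball q r" using q' by (simp add: dist_Pair_Pair dist_real_def abs_minus_commute)
      then have "(y, t) \<in> Kt" using r by (auto simp: Kt_def)
      then show "G (y, t) \<le> G (s', t)" using q q' by simp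
    qed
    then have "Dt = 0" using D(3) by simp
    then have lim: "((\<lambda>y. (G (s', y) - G (s', t)) / (y - t)) \<midarrow>t\<rightarrow> 0)"
      using D(2) by (simp add: has_field_derivative_iff)
    obtain d1 where d1: "d1 > 0" "\<And>y. y \<noteq> t \<Longrightarrow> \<bar>y - t\<bar> < d1 \<Longrightarrow> \<bar>(G (s', y) - G (s', t)) / (y - t)\<bar> < \<epsilon>/2"
      using lim[unfolded LIM_eq] \<epsilon> by (metis half_gt_zero real_norm_def diff_zero)
    show ?thesis
    proof (intro exI[of _ "min d1 r"] conjI allI impI)
      show "min d1 r > 0" using d1 r by simp
      fix t' assume t': "t \<le> t' \<and> t' < t + min d1 r"
      have inN: "(s', t') \<in> N"
        using t' r q' by (auto intro!: subsetD[OF r(2)] simp: dist_Pair_Pair dist_real_def)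
      have "G (s', t') \<ge> G (s', t) - \<epsilon>/2 * (t' - t)"
      proof (cases "t' = t")
        case True then show ?thesis by simp
      next
        case False
        then have pos: "t' - t > 0" using t' by simp
        have "\<bar>(G (s', t') - G (s', t)) / (t' - t)\<bar> < \<epsilon>/2" using d1(2)[of t'] False t' by (auto simp del: abs_divide)
        then have "\<bar>G (s', t') - G (s', t)\<bar> < \<epsilon>/2 * (t' - t)"
          using pos by (simp add: abs_div pos_divide_less_eq)
        then show ?thesis by linarith
      qed
      moreover have "\<epsilon>/2 * (t' - t) \<le> \<epsilon> * (t' - t)" using t' \<epsilon> by simp
      ultimately have "G (s', t') + \<epsilon> * (t' - t1) \<ge> M"
        using Gq q' by (simp add: algebra_simps)
      then have "(s', t') \<in> C" using inN by (simp add: C_def)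
      then show "t' \<in> S" unfolding S_def by force
    qed
  qed
  have "t2 \<in> S"
    by (rule real_induct_right[OF _ clS t1S step]) (auto simp: t2_def)
  then obtain s where "(s, t2) \<in> C" by (auto simp: S_def)
  then have "(s, t2) \<in> K2" "G (s, t2) + \<epsilon> * (t2 - t1) \<ge> M" by (auto simp: C_def K2_def)
  then show False using \<mu>(2) \<epsilon> by (force simp: t2_def)
qed

lemma transport:
  fixes g :: "real \<times> real \<Rightarrow> real"
  assumes op: "open \<Omega>" and cT: "compact T" and Tne: "T \<noteq> {}" and TO: "T \<subseteq> \<Omega>"
    and le: "\<And>p. p \<in> \<Omega> \<Longrightarrow> g p \<le> M" and eqT: "\<And>p. p \<in> \<Omega> \<Longrightarrow> g p = M \<Longrightarrow> p \<in> T"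
    and TM: "\<And>p. p \<in> T \<Longrightarrow> g p = M"
    and cg: "continuous_on \<Omega> g"
    and a: "a1\<^sup>2 + a2\<^sup>2 = 1"
    and der: "\<And>p. p \<in> \<Omega> \<Longrightarrow> \<exists>gx gy. (g has_derivative (\<lambda>h. fst h * gx + snd h * gy)) (at p) \<and>
                 (a1 * gx + a2 * gy = 0 \<longrightarrow> gx = 0 \<and> gy = 0)"
  shows False
proof -
  define \<Phi> where "\<Phi> = (\<lambda>(s::real, t::real). (s * a1 - t * a2, s * a2 + t * a1))"
  define \<Psi> where "\<Psi> = (\<lambda>(x::real, y::real). (a1 * x + a2 * y, - a2 * x + a1 * y))"
  have \<Phi>\<Psi>: "\<Phi> (\<Psi> z) = z" for z
  proof -
    obtain x y where z: "z = (x, y)" by (cases z)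
    have "(a1 * x + a2 * y) * a1 - (- a2 * x + a1 * y) * a2 = (a1\<^sup>2 + a2\<^sup>2) * x"
      "(a1 * x + a2 * y) * a2 + (- a2 * x + a1 * y) * a1 = (a1\<^sup>2 + a2\<^sup>2) * y"
      by (simp_all add: algebra_simps power2_eq_square)
    then show ?thesis using a by (simp add: \<Phi>_def \<Psi>_def z)
  qed
  have \<Psi>\<Phi>: "\<Psi> (\<Phi> z) = z" for z
  proof -
    obtain x y where z: "z = (x, y)" by (cases z)
    have "a1 * (x * a1 - y * a2) + a2 * (x * a2 + y * a1) = (a1\<^sup>2 + a2\<^sup>2) * x"
      "- a2 * (x * a1 - y * a2) + a1 * (x * a2 + y * a1) = (a1\<^sup>2 + a2\<^sup>2) * y"
      by (simp_all add: algebra_simps power2_eq_square)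
    then show ?thesis using a by (simp add: \<Phi>_def \<Psi>_def z)
  qed
  have c\<Phi>: "continuous_on UNIV \<Phi>" unfolding \<Phi>_def by (auto simp: split_beta' intro!: continuous_intros)
  have c\<Psi>: "continuous_on UNIV \<Psi>" unfolding \<Psi>_def by (auto simp: split_beta' intro!: continuous_intros)
  define Q where "Q = \<Phi> -` \<Omega>"
  have oQ: "open Q" unfolding Q_def using open_vimage[OF op c\<Phi>] .
  define T' where "T' = \<Psi> ` T"
  define G where "G = (\<lambda>p. g (\<Phi> p))"
  show False
  proof (rule core[of Q T' G M])
    show "open Q" by (fact oQ)
    show "compact T'" unfolding T'_def using compact_continuous_image[OF continuous_on_subset[OF c\<Psi>] cT] by simp
    show "T' \<noteq> {}" using Tne by (simp add: T'_def)
    show "T' \<subseteq> Q" using TO by (auto simp: T'_def Q_def \<Phi>\<Psi>)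
    show "G p \<le> M" if "p \<in> Q" for p using le that by (simp add: G_def Q_def)
    show "p \<in> T'" if "p \<in> Q" "G p = M" for p
    proof -
      have "\<Phi> p \<in> T" using eqT that by (simp add: G_def Q_def)
      then show ?thesis unfolding T'_def using \<Psi>\<Phi>[of p] by (metis image_eqI)
    qed
    show "G p = M" if "p \<in> T'" for p using that TM by (auto simp: T'_def G_def \<Phi>\<Psi>)
    show "continuous_on Q G" unfolding G_def
      by (rule continuous_on_compose2[OF cg continuous_on_subset[OF c\<Phi>]]) (auto simp: Q_def)
    fix s t assume st: "(s, t) \<in> Q"
    then have "\<Phi> (s, t) \<in> \<Omega>" by (simp add: Q_def)
    then obtain gx gy where D: "(g has_derivative (\<lambda>h. fst h * gx + snd h * gy)) (at (\<Phi> (s, t)))"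
      and P: "a1 * gx + a2 * gy = 0 \<longrightarrow> gx = 0 \<and> gy = 0" using der by blast
    have ds: "((\<lambda>s'. G (s', t)) has_real_derivative (a1 * gx + a2 * gy)) (at s)"
    proof -
      have inner: "((\<lambda>s'. (s' * a1 - t * a2, s' * a2 + t * a1)) has_derivative (\<lambda>h. (h * a1, h * a2))) (at s)"
        by (auto intro!: derivative_eq_intros)
      have "((\<lambda>s'. g (s' * a1 - t * a2, s' * a2 + t * a1)) has_derivative
              (\<lambda>h. fst (h * a1, h * a2) * gx + snd (h * a1, h * a2) * gy)) (at s)"
      proof -
        have D': "(g has_derivative (\<lambda>h. fst h * gx + snd h * gy)) (at (s * a1 - t * a2, s * a2 + t * a1))"
          using D by (simp add: \<Phi>_def)
        show ?thesis using has_derivative_compose[OF inner D'] by simp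
      qed
      then show ?thesis unfolding has_field_derivative_def G_def \<Phi>_def prod.case
        by (rule has_derivative_eq_rhs) (auto simp: fun_eq_iff algebra_simps)
    qed
    have dt: "((\<lambda>t'. G (s, t')) has_real_derivative (- a2 * gx + a1 * gy)) (at t)"
    proof -
      have inner: "((\<lambda>t'. (s * a1 - t' * a2, s * a2 + t' * a1)) has_derivative (\<lambda>h. (- h * a2, h * a1))) (at t)"
        by (auto intro!: derivative_eq_intros)
      have "((\<lambda>t'. g (s * a1 - t' * a2, s * a2 + t' * a1)) has_derivative
              (\<lambda>h. fst (- h * a2, h * a1) * gx + snd (- h * a2, h * a1) * gy)) (at t)"
      proof -
        have D': "(g has_derivative (\<lambda>h. fst h * gx + snd h * gy)) (at (s * a1 - t * a2, s * a2 + t * a1))"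
          using D by (simp add: \<Phi>_def)
        show ?thesis using has_derivative_compose[OF inner D'] by simp
      qed
      then show ?thesis unfolding has_field_derivative_def G_def \<Phi>_def prod.case
        by (rule has_derivative_eq_rhs) (auto simp: fun_eq_iff algebra_simps)
    qed
    show "\<exists>Ds Dt. ((\<lambda>s'. G (s', t)) has_real_derivative Ds) (at s) \<and>
                ((\<lambda>t'. G (s, t')) has_real_derivative Dt) (at t) \<and> (Ds = 0 \<longrightarrow> Dt = 0)"
      using ds dt P by (intro exI conjI) auto
  qed
qed


lemma psd_alg:
  fixes A B D a1 a2 :: real
  assumes h: "A * D - B\<^sup>2 \<ge> 0" and q: "a1 * (a1 * A + a2 * B) + a2 * (a1 * B + a2 * D) = 0"
  shows "a1 * A + a2 * B = 0 \<and> a1 * B + a2 * D = 0"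
proof -
  define X where "X = a1 * A + a2 * B"
  define Y where "Y = a1 * B + a2 * D"
  have e1: "A * (a1 * X + a2 * Y) = X\<^sup>2 + a2\<^sup>2 * (A * D - B\<^sup>2)"
    unfolding X_def Y_def by (simp add: algebra_simps power2_eq_square)
  have e2: "D * (a1 * X + a2 * Y) = Y\<^sup>2 + a1\<^sup>2 * (A * D - B\<^sup>2)"
    unfolding X_def Y_def by (simp add: algebra_simps power2_eq_square)
  have z: "a1 * X + a2 * Y = 0" using q by (simp add: X_def Y_def)
  have "X\<^sup>2 + a2\<^sup>2 * (A * D - B\<^sup>2) = 0" using e1 z by simp
  moreover have "a2\<^sup>2 * (A * D - B\<^sup>2) \<ge> 0" using h by simp
  ultimately have "X\<^sup>2 = 0" by (smt (verit) zero_le_power2)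
  moreover have "Y\<^sup>2 + a1\<^sup>2 * (A * D - B\<^sup>2) = 0" using e2 z by simp
  moreover have "a1\<^sup>2 * (A * D - B\<^sup>2) \<ge> 0" using h by simp
  ultimately have "X = 0" "Y = 0" by (smt (verit) zero_le_power2 power_eq_0_iff)+
  then show ?thesis by (simp add: X_def Y_def)
qed

lemma grad_ml:
  fixes \<Omega> :: "(real \<times> real) set" and h w :: "real \<times> real \<Rightarrow> real"
  assumes op: "open \<Omega>" and bd: "bounded \<Omega>"
    and hpos: "\<And>p. p \<in> \<Omega> \<Longrightarrow> h p \<ge> 0"
    and C2: "C2_on \<Omega> w"
    and eq: "\<And>p. p \<in> \<Omega> \<Longrightarrow>
           partial_x (partial_x w) p * partial_y (partial_y w) p - (partial_y (partial_x w) p)\<^sup>2 = h p"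
    and a: "a1\<^sup>2 + a2\<^sup>2 = 1"
    and z0: "z0 \<in> \<Omega>"
  shows "\<exists>x\<in>frontier \<Omega>. x \<in> closure {z \<in> \<Omega>. a1 * partial_x w z0 + a2 * partial_y w z0 \<le> a1 * partial_x w z + a2 * partial_y w z}"
proof (rule ccontr)
  define g where "g = (\<lambda>z. a1 * partial_x w z + a2 * partial_y w z)"
  define V where "V = {z \<in> \<Omega>. g z0 \<le> g z}"
  assume "\<not> ?thesis"
  then have nf: "\<And>x. x \<in> frontier \<Omega> \<Longrightarrow> x \<notin> closure V" unfolding V_def g_def by blast
  note C = C2[unfolded C2_on_def]
  have cg: "continuous_on \<Omega> g" unfolding g_def using C by (auto intro!: continuous_intros)
  have der: "\<exists>gx gy. (g has_derivative (\<lambda>h. fst h * gx + snd h * gy)) (at p) \<and>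
                 (a1 * gx + a2 * gy = 0 \<longrightarrow> gx = 0 \<and> gy = 0)" if p: "p \<in> \<Omega>" for p
  proof -
    define A where "A = partial_x (partial_x w) p"
    define B where "B = partial_y (partial_x w) p"
    define D where "D = partial_y (partial_y w) p"
    have sym: "partial_x (partial_y w) p = B"
      unfolding B_def using schwarz[OF op _ _ _ _ _ p] C by metis
    have d1: "(partial_x w has_derivative (\<lambda>h. fst h * A + snd h * B)) (at p)"
      unfolding A_def B_def using frechet_from_partials[OF op _ _ p] C by blast
    have d2: "(partial_y w has_derivative (\<lambda>h. fst h * B + snd h * D)) (at p)"
      unfolding D_def sym[symmetric] using frechet_from_partials[OF op _ _ p] C by blast
    have "(g has_derivative (\<lambda>h. a1 * (fst h * A + snd h * B) + a2 * (fst h * B + snd h * D))) (at p)"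
      unfolding g_def by (intro derivative_intros d1 d2)
    then have "(g has_derivative (\<lambda>h. fst h * (a1 * A + a2 * B) + snd h * (a1 * B + a2 * D))) (at p)"
      by (rule has_derivative_eq_rhs) (auto simp: fun_eq_iff algebra_simps)
    moreover have "A * D - B\<^sup>2 \<ge> 0" using eq[OF p] hpos[OF p] by (simp add: A_def B_def D_def)
    ultimately show ?thesis using psd_alg[of A D B a1 a2] by blast
  qed
  have clV: "closure V \<subseteq> \<Omega>"
  proof
    fix x assume x: "x \<in> closure V"
    have "V \<subseteq> \<Omega>" by (auto simp: V_def)
    then have "x \<in> closure \<Omega>" using x closure_mono by blast
    moreover have "x \<notin> frontier \<Omega>" using nf x by blast
    ultimately show "x \<in> \<Omega>" using op by (simp add: frontier_def interior_open)
  qed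
  have Veq: "V = closure V \<inter> g -` {g z0..}"
  proof
    show "V \<subseteq> closure V \<inter> g -` {g z0..}" using closure_subset[of V] by (auto simp: V_def)
    show "closure V \<inter> g -` {g z0..} \<subseteq> V" using clV by (auto simp: V_def)
  qed
  have "closed V"
    by (subst Veq, intro continuous_closed_preimage continuous_on_subset[OF cg clV]) auto
  moreover have "bounded V" using bd by (rule bounded_subset) (auto simp: V_def)
  ultimately have cV: "compact V" by (simp add: compact_eq_bounded_closed)
  have z0V: "z0 \<in> V" using z0 by (simp add: V_def)
  have cgV: "continuous_on V g" using cg by (rule continuous_on_subset) (auto simp: V_def)
  obtain z1 where z1: "z1 \<in> V" "\<And>z. z \<in> V \<Longrightarrow> g z \<le> g z1"
    using continuous_attains_sup[OF cV _ cgV] z0V by blast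
  define T where "T = V \<inter> g -` {g z1}"
  have "closed T" unfolding T_def using continuous_closed_preimage[OF cgV compact_imp_closed[OF cV]] by auto
  then have cT: "compact T" using compact_Int_closed[OF cV, of T] by (simp add: T_def Int_absorb1 inf.absorb_iff2)
  show False
  proof (rule transport[OF op cT _ _ _ _ _ cg a der])
    show "T \<noteq> {}" using z1 by (auto simp: T_def)
    show "T \<subseteq> \<Omega>" by (auto simp: T_def V_def)
    show "g p \<le> g z1" if "p \<in> \<Omega>" for p
    proof (cases "p \<in> V")
      case True then show ?thesis using z1 by blast
    next
      case False
      then have "g p < g z0" using that by (auto simp: V_def)
      moreover have "g z0 \<le> g z1" using z1(2)[OF z0V] .
      ultimately show ?thesis by simp
    qed
    show "p \<in> T" if "p \<in> \<Omega>" "g p = g z1" for p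
      using that z1 by (auto simp: T_def V_def)
    show "g p = g z1" if "p \<in> T" for p using that by (simp add: T_def)
  qed
qed


lemma limsup_lower:
  fixes \<phi> :: "real \<times> real \<Rightarrow> real" and X :: "nat \<Rightarrow> real \<times> real"
  assumes XO: "\<And>n. X n \<in> \<Omega>" and Xx: "X \<longlonglongrightarrow> x" and xO: "x \<notin> \<Omega>"
    and L: "(\<lambda>n. ereal (\<phi> (X n))) \<longlonglongrightarrow> L"
  shows "L \<le> Limsup (at x within \<Omega>) (\<lambda>z. ereal (\<phi> z))"
proof -
  have fl: "filterlim X (at x within \<Omega>) sequentially"
    unfolding filterlim_at using XO xO Xx by (auto intro!: always_eventually)
  show ?thesis unfolding Limsup_def
  proof (rule INF_greatest)
    fix P assume "P \<in> {P. eventually P (at x within \<Omega>)}"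
    then have "eventually P (at x within \<Omega>)" by simp
    then have ev: "eventually (\<lambda>n. P (X n)) sequentially"
      using fl by (simp add: filterlim_iff)
    show "L \<le> (SUP z\<in>{z. P z}. ereal (\<phi> z))"
    proof (rule tendsto_upperbound[OF L])
      show "eventually (\<lambda>n. ereal (\<phi> (X n)) \<le> (SUP z\<in>{z. P z}. ereal (\<phi> z))) sequentially"
        using ev by eventually_elim (auto intro: SUP_upper)
    qed simp
  qed
qed

lemma limsup_upper:
  fixes \<phi> :: "real \<times> real \<Rightarrow> real"
  shows "Limsup (at x within \<Omega>) (\<lambda>z. ereal (\<phi> z)) \<le> (SUP z\<in>\<Omega>. ereal (\<phi> z))"
proof (rule Limsup_bounded)
  have "eventually (\<lambda>z. z \<in> \<Omega>) (at x within \<Omega>)" by (auto simp: eventually_at_filter)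
  then show "eventually (\<lambda>z. ereal (\<phi> z) \<le> (SUP z\<in>\<Omega>. ereal (\<phi> z))) (at x within \<Omega>)"
    by eventually_elim (auto intro: SUP_upper)
qed

theorem theorem5:
  fixes \<Omega> :: "(real \<times> real) set" and h w :: "real \<times> real \<Rightarrow> real"
  assumes "open \<Omega>" and "bounded \<Omega>" and "\<Omega> \<noteq> {}"
    and "continuous_on \<Omega> h" and "\<And>p. p \<in> \<Omega> \<Longrightarrow> h p \<ge> 0"
    and "C2_on \<Omega> w"
    and "\<And>p. p \<in> \<Omega> \<Longrightarrow>
           partial_x (partial_x w) p * partial_y (partial_y w) p - (partial_y (partial_x w) p)\<^sup>2 = h p"
  shows "convex_hull_like \<Omega> (\<lambda>p. (partial_x w p, partial_y w p))"
  unfolding convex_hull_like_def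
proof (intro allI impI)
  note op = assms(1) and bd = assms(2) and ne = assms(3)
  define f where "f = (\<lambda>p. (partial_x w p, partial_y w p))"
  fix \<psi> :: "real \<times> real \<Rightarrow> real"
  assume "continuous_on UNIV \<psi> \<and> quasi_convex \<psi>"
  then have c\<psi>: "continuous_on UNIV \<psi>" and qc: "quasi_convex \<psi>" by auto
  define \<phi> where "\<phi> = (\<lambda>z. \<psi> (f z))"
  define S where "S = (SUP z\<in>\<Omega>. ereal (\<phi> z))"
  note C = assms(6)[unfolded C2_on_def]
  have cf: "continuous_on \<Omega> f" unfolding f_def using C by (auto intro!: continuous_intros)
  have c\<phi>: "continuous_on \<Omega> \<phi>" unfolding \<phi>_def
    by (rule continuous_on_compose2[OF c\<psi> cf]) auto
  have fr_out: "x \<notin> \<Omega>" if "x \<in> frontier \<Omega>" for x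
    using that op by (simp add: frontier_def interior_open)
  have up: "Limsup (at x within \<Omega>) (\<lambda>z. ereal (\<phi> z)) \<le> S" for x
    unfolding S_def by (rule limsup_upper)
  have fin: "\<exists>x\<in>frontier \<Omega>. Limsup (at x within \<Omega>) (\<lambda>z. ereal (\<psi> (f z))) = S"
    if x: "x \<in> frontier \<Omega>" and X: "\<And>n. X n \<in> \<Omega>" "X \<longlonglongrightarrow> x" "(\<lambda>n. ereal (\<phi> (X n))) \<longlonglongrightarrow> S" for x X
  proof -
    have "S \<le> Limsup (at x within \<Omega>) (\<lambda>z. ereal (\<phi> z))"
      by (rule limsup_lower[OF X(1) X(2) fr_out[OF x] X(3)])
    with up[of x] have "Limsup (at x within \<Omega>) (\<lambda>z. ereal (\<phi> z)) = S" by simp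
    then show ?thesis using x unfolding \<phi>_def by blast
  qed
  show "\<exists>x\<in>frontier \<Omega>. Limsup (at x within \<Omega>) (\<lambda>z. ereal (\<psi> (f z))) = S"
  proof (cases "\<exists>z0\<in>\<Omega>. \<forall>z\<in>\<Omega>. \<phi> z \<le> \<phi> z0")
    case True
    then obtain z0 where z0: "z0 \<in> \<Omega>" "\<And>z. z \<in> \<Omega> \<Longrightarrow> \<phi> z \<le> \<phi> z0" by blast
    define M where "M = \<phi> z0"
    have SM: "S = ereal M" unfolding S_def M_def
      by (rule antisym) (auto intro!: SUP_least SUP_upper z0)
    have suff: "\<exists>x\<in>frontier \<Omega>. Limsup (at x within \<Omega>) (\<lambda>z. ereal (\<psi> (f z))) = S"
      if x: "x \<in> frontier \<Omega>" "x \<in> closure V" and V: "V \<subseteq> \<Omega>" "\<And>z. z \<in> V \<Longrightarrow> \<phi> z = M" for x V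
    proof -
      obtain X where X: "\<And>n. X n \<in> V" "X \<longlonglongrightarrow> x" using x(2) closure_sequential by metis
      have "(\<lambda>n. ereal (\<phi> (X n))) \<longlonglongrightarrow> S" using X(1) V(2) SM by simp
      then show ?thesis using fin[OF x(1), of X] X V by blast
    qed
    show ?thesis
    proof (cases "\<forall>p. M \<le> \<psi> p")
      case True
      have "frontier \<Omega> \<noteq> {}" using ne bd frontier_eq_empty not_bounded_UNIV by metis
      then obtain x where x: "x \<in> frontier \<Omega>" by blast
      then have "x \<in> closure \<Omega>" by (simp add: frontier_def)
      moreover have "\<phi> z = M" if "z \<in> \<Omega>" for z
        using True[rule_format, of "f z"] z0(2)[OF that] by (simp add: \<phi>_def M_def)
      ultimately show ?thesis using suff[OF x] by blast
    next
      case False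
      define U where "U = {p. \<psi> p < M}"
      have Une: "U \<noteq> {}" using False by (auto simp: U_def not_le)
      have oU: "open U" unfolding U_def by (rule open_Collect_less[OF c\<psi>]) (auto intro: continuous_intros)
      have cU: "convex U" unfolding convex_def
      proof (intro allI impI ballI)
        fix x y and u v :: real assume xy: "x \<in> U" "y \<in> U" and uv: "0 \<le> u" "0 \<le> v" "u + v = 1"
        define r where "r = max (\<psi> x) (\<psi> y)"
        have "convex {z. \<psi> z \<le> r}" using qc by (simp add: quasi_convex_def)
        moreover have "x \<in> {z. \<psi> z \<le> r}" "y \<in> {z. \<psi> z \<le> r}" by (auto simp: r_def)
        ultimately have "u *\<^sub>R x + v *\<^sub>R y \<in> {z. \<psi> z \<le> r}" using uv by (intro convexD) auto
        moreover have "r < M" using xy by (simp add: U_def r_def)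
        ultimately show "u *\<^sub>R x + v *\<^sub>R y \<in> U" by (simp add: U_def)
      qed
      define q where "q = f z0"
      have qU: "q \<notin> U" by (simp add: U_def q_def M_def \<phi>_def)
      obtain a \<beta> where a: "a \<noteq> 0" "\<And>u. u \<in> U \<Longrightarrow> inner a u \<le> \<beta>" "inner a q \<ge> \<beta>"
        using separating_hyperplane_sets[OF cU convex_singleton Une, of q] qU by auto
      have strict: "inner a u < inner a q" if u: "u \<in> U" for u
      proof -
        obtain e where e: "e > 0" "ball u e \<subseteq> U" using oU u open_contains_ball by blast
        define u' where "u' = u + (e / 2 / norm a) *\<^sub>R a"
        have "dist u u' < e" using e a by (simp add: u'_def dist_norm)
        then have "u' \<in> U" using e by auto
        then have "inner a u' \<le> \<beta>" using a by blast
        moreover have "inner a u' = inner a u + e / 2 * norm a"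
          using a by (simp add: u'_def inner_add_right power2_norm_eq_inner[symmetric] power2_eq_square)
        moreover have "e / 2 * norm a > 0" using e a by simp
        ultimately show ?thesis using a(3) by linarith
      qed
      define a' where "a' = a /\<^sub>R norm a"
      define a1 where "a1 = fst a'"
      define a2 where "a2 = snd a'"
      have na: "norm a > 0" using a by simp
      have "norm a' = 1" using a by (simp add: a'_def)
      then have a12: "a1\<^sup>2 + a2\<^sup>2 = 1"
        unfolding a1_def a2_def by (metis norm_Pair prod.collapse real_sqrt_eq_1_iff real_norm_def abs_1 power2_abs)
      have inner': "inner a' v = a1 * fst v + a2 * snd v" for v
        by (simp add: a1_def a2_def inner_prod_def)
      define V where "V = {z \<in> \<Omega>. a1 * partial_x w z0 + a2 * partial_y w z0 \<le> a1 * partial_x w z + a2 * partial_y w z}"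
      have V\<phi>: "\<phi> z = M" if z: "z \<in> V" for z
      proof -
        have zO: "z \<in> \<Omega>" using z by (simp add: V_def)
        have "inner a' q \<le> inner a' (f z)" using z inner'[of q] inner'[of "f z"] by (simp add: V_def q_def f_def)
        then have "inner a q \<le> inner a (f z)" using na by (simp add: a'_def divide_le_cancel)
        then have "f z \<notin> U" using strict[of "f z"] by linarith
        then have "M \<le> \<phi> z" by (simp add: U_def \<phi>_def)
        then show ?thesis using z0(2)[OF zO] by (simp add: M_def)
      qed
      obtain x where x: "x \<in> frontier \<Omega>" "x \<in> closure V"
        using grad_ml[OF op bd assms(5) assms(6) assms(7) a12 z0(1)] unfolding V_def by blast
      show ?thesis by (rule suff[OF x _ V\<phi>]) (auto simp: V_def)
    qed
  next
    case False
    then have na: "\<And>z0. z0 \<in> \<Omega> \<Longrightarrow> \<exists>z\<in>\<Omega>. \<phi> z0 < \<phi> z" by (auto simp: not_le)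
    obtain g :: "nat \<Rightarrow> ereal" where g: "incseq g" "range g \<subseteq> (\<lambda>z. ereal (\<phi> z)) ` \<Omega>" "S = (SUP i. g i)"
      using Sup_countable_SUP[of "(\<lambda>z. ereal (\<phi> z)) ` \<Omega>"] ne unfolding S_def by auto
    have "\<forall>n. \<exists>z. z \<in> \<Omega> \<and> g n = ereal (\<phi> z)" using g(2) by blast
    then obtain X where X: "\<And>n. X n \<in> \<Omega>" "\<And>n. g n = ereal (\<phi> (X n))" by metis
    have gS: "g \<longlonglongrightarrow> S" using LIMSEQ_SUP[OF g(1)] g(3) by simp
    have "seq_compact (closure \<Omega>)" using bd by (intro compact_imp_seq_compact) simp
    moreover have "\<forall>n. X n \<in> closure \<Omega>" using X(1) closure_subset by blast
    ultimately obtain x r where xr: "x \<in> closure \<Omega>" "strict_mono r" "(X \<circ> r) \<longlonglongrightarrow> x"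
      by (rule seq_compactE)
    have lim: "(\<lambda>n. ereal (\<phi> (X (r n)))) \<longlonglongrightarrow> S"
      using LIMSEQ_subseq_LIMSEQ[OF gS xr(2)] X(2) by (simp add: o_def)
    have xO: "x \<notin> \<Omega>"
    proof
      assume xO: "x \<in> \<Omega>"
      have "isCont \<phi> x" using c\<phi> op xO continuous_on_eq_continuous_at by blast
      then have "(\<lambda>n. \<phi> (X (r n))) \<longlonglongrightarrow> \<phi> x"
        using isCont_tendsto_compose[of x \<phi> "X \<circ> r"] xr(3) by (simp add: o_def)
      then have "(\<lambda>n. ereal (\<phi> (X (r n)))) \<longlonglongrightarrow> ereal (\<phi> x)" by (rule tendsto_ereal)
      then have "ereal (\<phi> x) = S" using lim LIMSEQ_unique by blast
      moreover obtain z where "z \<in> \<Omega>" "\<phi> x < \<phi> z" using na[OF xO] by blast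
      moreover have "ereal (\<phi> z) \<le> S" unfolding S_def using \<open>z \<in> \<Omega>\<close> by (rule SUP_upper)
      ultimately show False by (metis ereal_less_eq(3) not_le)
    qed
    then have "x \<in> frontier \<Omega>" using xr(1) op by (simp add: frontier_def interior_open)
    then show ?thesis using fin[of x "X \<circ> r"] X(1) xr(3) lim by (simp add: o_def)
  qed
qed


end
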